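(* Let $G$ be a maximal $3$-$\gamma_{c}$-vertex critical graph of order $n$, with independence number $\alpha$ and clique number $\omega$. Then $\alpha+\omega\leq n-1$, and equality holds if and only if $G\in\mathcal{G}_{1}(l)$ for some $l\geq 2$.
   Context: All graphs are finite, simple and connected. A set $D\subseteq V(G)$ is a connected dominating set of $G$ if every vertex of $G$ is in $D$ or adjacent to a vertex of $D$, and $G[D]$ is connected; $\gamma_{c}(G)$ is the minimum cardinality of such a set. $G$ is $k$-$\gamma_{c}$-edge critical if $\gamma_{c}(G)=k$ and $\gamma_{c}(G+uv)<k$ for every pair of non-adjacent vertices $u,v$. A $2$-connected graph $G$ is $k$-$\gamma_{c}$-vertex critical if $\gamma_{c}(G)=k$ and $\gamma_{c}(G-v)<k$ for every $v\in V(G)$. $G$ is maximal $k$-$\gamma_{c}$-vertex critical if it is both $k$-$\gamma_{c}$-edge critical and $k$-$\gamma_{c}$-vertex critical. For $l\geq 2$, the class $\mathcal{G}_{1}(l)$ consists of the graphs (unique up to isomorphism) on vertex set $\{v,q_{1},\dots,q_{l},z_{1},\dots,z_{l}\}$ whose edges are: $vz_{i}$ for all $i$; $q_{i}q_{j}$ for all $i\neq j$; and $z_{i}q_{j}$ for all $i\neq j$ (so $\{q_1,\dots,q_l\}$ is a clique, $\{z_1,\dots,z_l\}$ is independent, and $z_iq_i\notin E$). For $l=2$ this graph is $C_5$. *)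

theory Defs
  imports Main
begin

definition graph :: "'a set \<Rightarrow> ('a \<times> 'a) set \<Rightarrow> bool" where
  "graph V E \<longleftrightarrow> finite V \<and> E \<subseteq> V \<times> V \<and> sym E \<and> irrefl E"

definition induced :: "('a \<times> 'a) set \<Rightarrow> 'a set \<Rightarrow> ('a \<times> 'a) set" where
  "induced E S = E \<inter> (S \<times> S)"

definition connected_set :: "('a \<times> 'a) set \<Rightarrow> 'a set \<Rightarrow> bool" where
  "connected_set E S \<longleftrightarrow> S \<noteq> {} \<and> (\<forall>u\<in>S. \<forall>v\<in>S. (u, v) \<in> (induced E S)\<^sup>*)"

definition connected_graph :: "'a set \<Rightarrow> ('a \<times> 'a) set \<Rightarrow> bool" where
  "connected_graph V E \<longleftrightarrow> graph V E \<and> connected_set E V"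

definition two_connected :: "'a set \<Rightarrow> ('a \<times> 'a) set \<Rightarrow> bool" where
  "two_connected V E \<longleftrightarrow> connected_graph V E \<and> card V \<ge> 3 \<and>
     (\<forall>v\<in>V. connected_set E (V - {v}))"

definition dominating :: "'a set \<Rightarrow> ('a \<times> 'a) set \<Rightarrow> 'a set \<Rightarrow> bool" where
  "dominating V E D \<longleftrightarrow> D \<subseteq> V \<and> (\<forall>x\<in>V. x \<in> D \<or> (\<exists>d\<in>D. (x, d) \<in> E))"

definition connected_dominating :: "'a set \<Rightarrow> ('a \<times> 'a) set \<Rightarrow> 'a set \<Rightarrow> bool" where
  "connected_dominating V E D \<longleftrightarrow> dominating V E D \<and> connected_set E D"

definition gamma_c :: "'a set \<Rightarrow> ('a \<times> 'a) set \<Rightarrow> nat" where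
  "gamma_c V E = (LEAST k. \<exists>D. connected_dominating V E D \<and> card D = k)"

definition add_edge :: "('a \<times> 'a) set \<Rightarrow> 'a \<Rightarrow> 'a \<Rightarrow> ('a \<times> 'a) set" where
  "add_edge E u v = E \<union> {(u, v), (v, u)}"

definition delete_vertex :: "'a set \<Rightarrow> ('a \<times> 'a) set \<Rightarrow> 'a \<Rightarrow> ('a \<times> 'a) set" where
  "delete_vertex V E v = induced E (V - {v})"

definition edge_critical :: "nat \<Rightarrow> 'a set \<Rightarrow> ('a \<times> 'a) set \<Rightarrow> bool" where
  "edge_critical k V E \<longleftrightarrow> connected_graph V E \<and> gamma_c V E = k \<and>
     (\<forall>u\<in>V. \<forall>v\<in>V. u \<noteq> v \<and> (u, v) \<notin> E \<longrightarrow> gamma_c V (add_edge E u v) < k)"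

definition vertex_critical :: "nat \<Rightarrow> 'a set \<Rightarrow> ('a \<times> 'a) set \<Rightarrow> bool" where
  "vertex_critical k V E \<longleftrightarrow> two_connected V E \<and> gamma_c V E = k \<and>
     (\<forall>v\<in>V. gamma_c (V - {v}) (delete_vertex V E v) < k)"

definition maximal_vertex_critical :: "nat \<Rightarrow> 'a set \<Rightarrow> ('a \<times> 'a) set \<Rightarrow> bool" where
  "maximal_vertex_critical k V E \<longleftrightarrow> edge_critical k V E \<and> vertex_critical k V E"

definition independent :: "('a \<times> 'a) set \<Rightarrow> 'a set \<Rightarrow> bool" where
  "independent E S \<longleftrightarrow> (\<forall>u\<in>S. \<forall>v\<in>S. (u, v) \<notin> E)"

definition clique :: "('a \<times> 'a) set \<Rightarrow> 'a set \<Rightarrow> bool" where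
  "clique E S \<longleftrightarrow> (\<forall>u\<in>S. \<forall>v\<in>S. u \<noteq> v \<longrightarrow> (u, v) \<in> E)"

definition independence_number :: "'a set \<Rightarrow> ('a \<times> 'a) set \<Rightarrow> nat" where
  "independence_number V E = Max {card S | S. S \<subseteq> V \<and> independent E S}"

definition clique_number :: "'a set \<Rightarrow> ('a \<times> 'a) set \<Rightarrow> nat" where
  "clique_number V E = Max {card S | S. S \<subseteq> V \<and> clique E S}"

datatype g1v = Vtx | Q nat | Z nat

definition g1_V :: "nat \<Rightarrow> g1v set" where
  "g1_V l = {Vtx} \<union> Q ` {1..l} \<union> Z ` {1..l}"

definition g1_E :: "nat \<Rightarrow> (g1v \<times> g1v) set" where
  "g1_E l =
     {(Vtx, Z i) | i. i \<in> {1..l}} \<union> {(Z i, Vtx) | i. i \<in> {1..l}} \<union>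
     {(Q i, Q j) | i j. i \<in> {1..l} \<and> j \<in> {1..l} \<and> i \<noteq> j} \<union>
     {(Z i, Q j) | i j. i \<in> {1..l} \<and> j \<in> {1..l} \<and> i \<noteq> j} \<union>
     {(Q j, Z i) | i j. i \<in> {1..l} \<and> j \<in> {1..l} \<and> i \<noteq> j}"

definition graph_iso :: "'a set \<Rightarrow> ('a \<times> 'a) set \<Rightarrow> 'b set \<Rightarrow> ('b \<times> 'b) set \<Rightarrow> bool" where
  "graph_iso V E V' E' \<longleftrightarrow> (\<exists>f. bij_betw f V V' \<and>
     (\<forall>u\<in>V. \<forall>w\<in>V. (u, w) \<in> E \<longleftrightarrow> (f u, f w) \<in> E'))"

definition in_G1 :: "nat \<Rightarrow> 'a set \<Rightarrow> ('a \<times> 'a) set \<Rightarrow> bool" where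
  "in_G1 l V E \<longleftrightarrow> graph_iso V E (g1_V l) (g1_E l)"

end

theory Submission
  imports Defs
begin

lemma rt_pair:
  assumes "(x, y) \<in> (induced E {a,b})\<^sup>*" "x = a"
  shows "y = a \<or> (a, b) \<in> E"
  using assms(1,2)
proof (induction rule: rtrancl_induct)
  case base then show ?case by simp
next
  case (step y z)
  then show ?case unfolding induced_def by auto
qed

lemma card_le2_pair:
  assumes "finite D" "D \<noteq> {}" "card D < 3"
  shows "\<exists>a b. D = {a, b}"
proof -
  have "card D = 1 \<or> card D = 2" using assms by (metis One_nat_def card_0_eq less_Suc_eq numeral_3_eq_3 numeral_2_eq_2 less_Suc0 not_less_eq)
  then show ?thesis
  proof
    assume "card D = 1" then obtain a where "D = {a}" by (auto simp: card_Suc_eq)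
    then show ?thesis by (intro exI[of _ a]) auto
  next
    assume "card D = 2" then show ?thesis by (auto simp: card_2_iff)
  qed
qed

lemma cds_pair:
  assumes "connected_dominating V E D" "card D < 3" "finite V"
  shows "\<exists>a b. D = {a,b} \<and> a \<in> V \<and> b \<in> V \<and> (a = b \<or> (a, b) \<in> E) \<and>
     (\<forall>z\<in>V. z = a \<or> z = b \<or> (z, a) \<in> E \<or> (z, b) \<in> E)"
proof -
  have DV: "D \<subseteq> V" "D \<noteq> {}" using assms(1) unfolding connected_dominating_def dominating_def connected_set_def by auto
  then have "finite D" using assms(3) finite_subset by auto
  then obtain a b where ab: "D = {a, b}" using card_le2_pair DV assms(2) by blast
  have "(a, b) \<in> (induced E {a,b})\<^sup>*" using assms(1) ab unfolding connected_dominating_def connected_set_def by auto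
  then have "a = b \<or> (a,b) \<in> E" using rt_pair by fastforce
  moreover have "\<forall>z\<in>V. z = a \<or> z = b \<or> (z, a) \<in> E \<or> (z, b) \<in> E"
    using assms(1) ab unfolding connected_dominating_def dominating_def by auto
  ultimately show ?thesis using ab DV by auto
qed

lemma pair_cds:
  assumes "a \<in> V" "b \<in> V" "a = b \<or> (a, b) \<in> E" "sym E"
    "\<forall>z\<in>V. z = a \<or> z = b \<or> (z, a) \<in> E \<or> (z, b) \<in> E"
  shows "connected_dominating V E {a,b}"
proof -
  have "(b, a) \<in> E" if "(a,b) \<in> E" using that assms(4) by (meson symD)
  then have "(u, v) \<in> (induced E {a,b})\<^sup>*" if "u \<in> {a,b}" "v \<in> {a,b}" for u v
    using that assms(3) unfolding induced_def by auto
  then show ?thesis using assms unfolding connected_dominating_def dominating_def connected_set_def by auto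
qed

lemma gamma_lt3:
  assumes "connected_dominating V E D0" "gamma_c V E < 3"
  shows "\<exists>D. connected_dominating V E D \<and> card D < 3"
proof -
  have "\<exists>D. connected_dominating V E D \<and> card D = gamma_c V E"
    unfolding gamma_c_def by (rule LeastI[of _ "card D0"]) (use assms in auto)
  then show ?thesis using assms by auto
qed

lemma gamma_ge:
  assumes "gamma_c V E = 3" "connected_dominating V E D"
  shows "card D \<ge> 3"
proof -
  have "gamma_c V E \<le> card D" unfolding gamma_c_def by (rule Least_le) (use assms in auto)
  then show ?thesis using assms by simp
qed

lemma nbr_exists:
  assumes "connected_set E V" "x \<in> V" "y \<in> V" "x \<noteq> y"
  shows "\<exists>z\<in>V. (x, z) \<in> E"
proof -
  have "(x, y) \<in> (induced E V)\<^sup>*" using assms unfolding connected_set_def by auto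
  then obtain z where "(x, z) \<in> induced E V" using assms(4) by (metis converse_rtranclE)
  then show ?thesis unfolding induced_def by auto
qed

locale crit =
  fixes V :: "'a set" and E :: "('a \<times> 'a) set"
  assumes fin: "finite V" and sub: "E \<subseteq> V \<times> V"
    and symm: "(x, y) \<in> E \<Longrightarrow> (y, x) \<in> E"
    and irr: "(x, x) \<notin> E"
    and nd: "a \<in> V \<Longrightarrow> b \<in> V \<Longrightarrow> a = b \<or> (a, b) \<in> E \<Longrightarrow>
             \<exists>z\<in>V. z \<noteq> a \<and> z \<noteq> b \<and> (z, a) \<notin> E \<and> (z, b) \<notin> E"
    and vc: "x \<in> V \<Longrightarrow> \<exists>a b. a \<in> V \<and> b \<in> V \<and> (a, b) \<in> E \<and> a \<noteq> x \<and> b \<noteq> x \<and>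
             (x, a) \<notin> E \<and> (x, b) \<notin> E \<and> (\<forall>z\<in>V. z = x \<or> z = a \<or> z = b \<or> (z, a) \<in> E \<or> (z, b) \<in> E)"
    and ec: "u \<in> V \<Longrightarrow> w \<in> V \<Longrightarrow> u \<noteq> w \<Longrightarrow> (u, w) \<notin> E \<Longrightarrow>
             \<exists>a b. a \<in> V \<and> b \<in> V \<and> (a = b \<or> (a, b) \<in> add_edge E u w) \<and>
             (\<forall>z\<in>V. z = a \<or> z = b \<or> (z, a) \<in> add_edge E u w \<or> (z, b) \<in> add_edge E u w)"
    and big: "3 \<le> card V"
    and conn: "connected_set E V"

lemma mvc_crit:
  assumes "maximal_vertex_critical 3 V E"
  shows "crit V E"
proof -
  have G: "graph V E" and CS: "connected_set E V" and g3: "gamma_c V E = 3"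
    and c3: "card V \<ge> 3" and cv: "\<forall>v\<in>V. connected_set E (V - {v})"
    and vcr: "\<forall>v\<in>V. gamma_c (V - {v}) (delete_vertex V E v) < 3"
    and ecr: "\<forall>u\<in>V. \<forall>v\<in>V. u \<noteq> v \<and> (u, v) \<notin> E \<longrightarrow> gamma_c V (add_edge E u v) < 3"
    using assms unfolding maximal_vertex_critical_def edge_critical_def vertex_critical_def
      two_connected_def connected_graph_def by auto
  have fin: "finite V" and sub: "E \<subseteq> V \<times> V" and sy: "sym E" and ir: "irrefl E"
    using G unfolding graph_def by auto
  have symm: "(x, y) \<in> E \<Longrightarrow> (y, x) \<in> E" for x y using sy by (meson symD)
  have irr: "(x, x) \<notin> E" for x using ir by (simp add: irrefl_def)
  have nd: "\<exists>z\<in>V. z \<noteq> a \<and> z \<noteq> b \<and> (z, a) \<notin> E \<and> (z, b) \<notin> E"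
    if "a \<in> V" "b \<in> V" "a = b \<or> (a, b) \<in> E" for a b
  proof (rule ccontr)
    assume "\<not> ?thesis"
    then have "connected_dominating V E {a,b}" using pair_cds[of a V b E] that sy by blast
    then have "card {a,b} \<ge> 3" using gamma_ge g3 by blast
    moreover have "card {a,b} \<le> 2" by (simp add: card_insert_if)
    ultimately show False by simp
  qed
  have vc: "\<exists>a b. a \<in> V \<and> b \<in> V \<and> (a, b) \<in> E \<and> a \<noteq> x \<and> b \<noteq> x \<and>
             (x, a) \<notin> E \<and> (x, b) \<notin> E \<and> (\<forall>z\<in>V. z = x \<or> z = a \<or> z = b \<or> (z, a) \<in> E \<or> (z, b) \<in> E)"
    if xV: "x \<in> V" for x
  proof -
    let ?V = "V - {x}" and ?E = "delete_vertex V E x"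
    have ii: "induced ?E ?V = induced E ?V" unfolding delete_vertex_def induced_def by auto
    have cvx: "connected_set E ?V" using cv xV by blast
    have "connected_set ?E ?V" using cvx unfolding connected_set_def ii by simp
    then have "connected_dominating ?V ?E ?V"
      unfolding connected_dominating_def dominating_def by blast
    then obtain D where D: "connected_dominating ?V ?E D" "card D < 3"
      using gamma_lt3 vcr xV by blast
    then obtain a b where ab: "D = {a,b}" "a \<in> ?V" "b \<in> ?V" "a = b \<or> (a, b) \<in> ?E"
      "\<forall>z\<in>?V. z = a \<or> z = b \<or> (z, a) \<in> ?E \<or> (z, b) \<in> ?E"
      using cds_pair[of ?V ?E D] fin D by blast
    have EE: "?E \<subseteq> E" unfolding delete_vertex_def induced_def by auto
    have dom: "\<forall>z\<in>V. z = x \<or> z = a \<or> z = b \<or> (z, a) \<in> E \<or> (z, b) \<in> E"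
      using ab(5) EE by blast
    show ?thesis
    proof (cases "a = b")
      case True
      have "card (V - {x}) \<ge> 2" using c3 xV fin by simp
      then have "V - {x} \<noteq> {}" by (metis card.empty not_numeral_le_zero)
      then obtain y where y: "y \<in> V" "y \<noteq> x" by blast
      obtain z where z: "z \<in> V" "(x, z) \<in> E" using nbr_exists[OF CS xV y(1)] y(2) by blast
      show ?thesis
      proof (cases "z = a")
        case True
        then have "\<forall>w\<in>V. w = a \<or> w = a \<or> (w, a) \<in> E \<or> (w, a) \<in> E"
          using dom \<open>a = b\<close> z by auto
        moreover obtain w where "w \<in> V" "w \<noteq> a" "(w, a) \<notin> E"
          using nd[of a a] ab(2) by blast
        ultimately show ?thesis by blast
      next
        case False
        have "z \<noteq> x" using z irr by auto
        then have za: "(z, a) \<in> E" using dom z \<open>a = b\<close> False by auto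
        have dz: "\<forall>w\<in>V. w = a \<or> w = z \<or> (w, a) \<in> E \<or> (w, z) \<in> E"
          using dom \<open>a = b\<close> z by auto
        have "(a, z) \<in> E" using symm za by blast
        then obtain w where "w \<in> V" "w \<noteq> a" "w \<noteq> z" "(w, a) \<notin> E" "(w, z) \<notin> E"
          using nd[of a z] ab(2) z(1) by blast
        then show ?thesis using dz by blast
      qed
    next
      case False
      then have abE: "(a, b) \<in> E" using ab EE by auto
      have "(x, a) \<notin> E \<and> (x, b) \<notin> E"
      proof (rule ccontr)
        assume "\<not> ?thesis"
        then have "\<forall>w\<in>V. w = a \<or> w = b \<or> (w, a) \<in> E \<or> (w, b) \<in> E" using dom by auto
        then show False using nd[of a b] ab abE by auto
      qed
      moreover have "a \<in> V" "b \<in> V" "a \<noteq> x" "b \<noteq> x" using ab(2,3) by simp_all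
      ultimately show ?thesis using abE dom by blast
    qed
  qed
  have ec: "\<exists>a b. a \<in> V \<and> b \<in> V \<and> (a = b \<or> (a, b) \<in> add_edge E u w) \<and>
             (\<forall>z\<in>V. z = a \<or> z = b \<or> (z, a) \<in> add_edge E u w \<or> (z, b) \<in> add_edge E u w)"
    if uw: "u \<in> V" "w \<in> V" "u \<noteq> w" "(u, w) \<notin> E" for u w
  proof -
    have "induced E V \<subseteq> induced (add_edge E u w) V" unfolding induced_def add_edge_def by auto
    then have "(induced E V)\<^sup>* \<subseteq> (induced (add_edge E u w) V)\<^sup>*" by (rule rtrancl_mono)
    then have "connected_dominating V (add_edge E u w) V"
      using CS unfolding connected_dominating_def dominating_def connected_set_def by blast
    then obtain D where "connected_dominating V (add_edge E u w) D" "card D < 3"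
      using gamma_lt3[of V "add_edge E u w" V] ecr uw by blast
    then show ?thesis using cds_pair[of V "add_edge E u w" D] fin by blast
  qed
  show ?thesis
    apply unfold_locales
    apply (rule fin) apply (rule sub) apply (erule symm) apply (rule irr)
    apply (erule (2) nd) apply (erule vc) apply (erule (3) ec) apply (rule c3) apply (rule CS)
    done
qed

lemma g1E_simps[simp]:
  "(Vtx, Z i) \<in> g1_E l \<longleftrightarrow> i \<in> {1..l}"
  "(Z i, Vtx) \<in> g1_E l \<longleftrightarrow> i \<in> {1..l}"
  "(Vtx, Vtx) \<notin> g1_E l"
  "(Vtx, Q i) \<notin> g1_E l"
  "(Q i, Vtx) \<notin> g1_E l"
  "(Z i, Z j) \<notin> g1_E l"
  "(Q i, Q j) \<in> g1_E l \<longleftrightarrow> i \<in> {1..l} \<and> j \<in> {1..l} \<and> i \<noteq> j"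
  "(Z i, Q j) \<in> g1_E l \<longleftrightarrow> i \<in> {1..l} \<and> j \<in> {1..l} \<and> i \<noteq> j"
  "(Q j, Z i) \<in> g1_E l \<longleftrightarrow> i \<in> {1..l} \<and> j \<in> {1..l} \<and> i \<noteq> j"
  unfolding g1_E_def by auto

lemma g1V_simps[simp]:
  "Vtx \<in> g1_V l" "Q i \<in> g1_V l \<longleftrightarrow> i \<in> {1..l}" "Z i \<in> g1_V l \<longleftrightarrow> i \<in> {1..l}"
  unfolding g1_V_def by auto

lemma card_g1V: "card (g1_V l) = 2 * l + 1"
proof -
  have "g1_V l = insert Vtx (Q ` {1..l} \<union> Z ` {1..l})" unfolding g1_V_def by auto
  moreover have "card (Q ` {1..l} \<union> Z ` {1..l}) = l + l"
    by (subst card_Un_disjoint) (auto simp: card_image inj_on_def)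
  moreover have "Vtx \<notin> Q ` {1..l} \<union> Z ` {1..l}" by auto
  ultimately show ?thesis by simp
qed

lemma g1_indep_le:
  assumes l: "l \<ge> 2" and SV: "S \<subseteq> g1_V l" and ind: "independent (g1_E l) S"
  shows "card S \<le> l"
proof -
  have ind': "(u, w) \<notin> g1_E l" if "u \<in> S" "w \<in> S" for u w using ind that unfolding independent_def by blast
  have fS: "finite S" using SV finite_subset unfolding g1_V_def by blast
  show ?thesis
  proof (cases "\<exists>i. Q i \<in> S")
    case True
    then obtain i where Qi: "Q i \<in> S" by blast
    then have i: "i \<in> {1..l}" using SV by auto
    have sub: "S \<subseteq> {Q i, Z i, Vtx}"
    proof
      fix x assume x: "x \<in> S"
      then have xV: "x \<in> g1_V l" using SV by auto
      show "x \<in> {Q i, Z i, Vtx}"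
      proof (cases x)
        case (Q j) then show ?thesis using ind'[OF Qi x] i xV by auto
      next
        case (Z j) then show ?thesis using ind'[OF Qi x] i xV by auto
      qed simp
    qed
    have "\<not> (Z i \<in> S \<and> Vtx \<in> S)" using ind' i by fastforce
    then have "S \<subseteq> {Q i, Z i} \<or> S \<subseteq> {Q i, Vtx}" using sub by blast
    then have "card S \<le> 2"
    proof
      assume "S \<subseteq> {Q i, Z i}" then have "card S \<le> card {Q i, Z i}" by (intro card_mono) auto
      then show ?thesis by (simp add: card_insert_if)
    next
      assume "S \<subseteq> {Q i, Vtx}" then have "card S \<le> card {Q i, Vtx}" by (intro card_mono) auto
      then show ?thesis by (simp add: card_insert_if)
    qed
    then show ?thesis using l by simp
  next
    case False
    show ?thesis
    proof (cases "Vtx \<in> S")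
      case True
      have "S \<subseteq> {Vtx}"
      proof
        fix x assume x: "x \<in> S"
        then have xV: "x \<in> g1_V l" using SV by auto
        show "x \<in> {Vtx}"
        proof (cases x)
          case (Q j) then show ?thesis using False x by auto
        next
          case (Z j) then show ?thesis using ind'[OF True x] xV by auto
        qed simp
      qed
      then have "card S \<le> 1" using card_mono[of "{Vtx}" S] by simp
      then show ?thesis using l by simp
    next
      case F2: False
      have "S \<subseteq> Z ` {1..l}"
      proof
        fix x assume x: "x \<in> S"
        then have xV: "x \<in> g1_V l" using SV by auto
        show "x \<in> Z ` {1..l}"
        proof (cases x)
          case (Q j) then show ?thesis using False x by auto
        next
          case (Z j) then show ?thesis using xV by auto
        qed (use F2 x in simp)
      qed
      then have "card S \<le> card (Z ` {1..l})" by (intro card_mono) auto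
      also have "\<dots> \<le> l" using card_image_le[of "{1..l}" Z] by simp
      finally show ?thesis .
    qed
  qed
qed

lemma g1_clique_le:
  assumes l: "l \<ge> 2" and SV: "S \<subseteq> g1_V l" and cl: "clique (g1_E l) S"
  shows "card S \<le> l"
proof -
  have cl': "(u, w) \<in> g1_E l" if "u \<in> S" "w \<in> S" "u \<noteq> w" for u w using cl that unfolding clique_def by blast
  show ?thesis
  proof (cases "Vtx \<in> S")
    case True
    show ?thesis
    proof (cases "\<exists>j. Z j \<in> S")
      case True
      then obtain j where Zj: "Z j \<in> S" by blast
      have "S \<subseteq> {Vtx, Z j}"
      proof
        fix x assume x: "x \<in> S"
        show "x \<in> {Vtx, Z j}"
        proof (cases x)
          case (Q i) then show ?thesis using cl'[OF \<open>Vtx \<in> S\<close> x] by auto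
        next
          case (Z i) then show ?thesis using cl'[OF Zj x] by auto
        qed simp
      qed
      then have "card S \<le> card {Vtx, Z j}" by (intro card_mono) auto
      then show ?thesis using l by (simp add: card_insert_if)
    next
      case False
      have "S \<subseteq> {Vtx}"
      proof
        fix x assume x: "x \<in> S"
        show "x \<in> {Vtx}"
        proof (cases x)
          case (Q i) then show ?thesis using cl'[OF \<open>Vtx \<in> S\<close> x] by auto
        next
          case (Z i) then show ?thesis using False x by auto
        qed simp
      qed
      then have "card S \<le> 1" using card_mono[of "{Vtx}" S] by simp
      then show ?thesis using l by simp
    qed
  next
    case NV: False
    show ?thesis
    proof (cases "\<exists>j. Z j \<in> S")
      case True
      then obtain j where Zj: "Z j \<in> S" by blast
      then have j: "j \<in> {1..l}" using SV by auto
      have "S \<subseteq> insert (Z j) (Q ` ({1..l} - {j}))"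
      proof
        fix x assume x: "x \<in> S"
        then have xV: "x \<in> g1_V l" using SV by auto
        show "x \<in> insert (Z j) (Q ` ({1..l} - {j}))"
        proof (cases x)
          case (Q i) then show ?thesis using cl'[OF Zj x] by auto
        next
          case (Z i) then show ?thesis using cl'[OF Zj x] by auto
        qed (use NV x in simp)
      qed
      then have "card S \<le> card (insert (Z j) (Q ` ({1..l} - {j})))" by (intro card_mono) auto
      also have "\<dots> \<le> Suc (card (Q ` ({1..l} - {j})))" by (simp add: card_insert_if)
      also have "\<dots> \<le> Suc (card ({1..l} - {j}))" using card_image_le[of "{1..l} - {j}" Q] by simp
      also have "\<dots> = l" using j by simp
      finally show ?thesis .
    next
      case False
      have "S \<subseteq> Q ` {1..l}"
      proof
        fix x assume x: "x \<in> S"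
        then have xV: "x \<in> g1_V l" using SV by auto
        show "x \<in> Q ` {1..l}"
        proof (cases x)
          case (Q i) then show ?thesis using xV by auto
        next
          case (Z i) then show ?thesis using False x by auto
        qed (use NV x in simp)
      qed
      then have "card S \<le> card (Q ` {1..l})" by (intro card_mono) auto
      also have "\<dots> \<le> l" using card_image_le[of "{1..l}" Q] by simp
      finally show ?thesis .
    qed
  qed
qed

lemma g1_alpha: assumes "l \<ge> 2" shows "independence_number (g1_V l) (g1_E l) = l"
proof -
  let ?A = "{card S | S. S \<subseteq> g1_V l \<and> independent (g1_E l) S}"
  have fin: "finite ?A"
  proof -
    have "?A \<subseteq> card ` Pow (g1_V l)" by auto
    moreover have "finite (g1_V l)" unfolding g1_V_def by simp
    ultimately show ?thesis using finite_subset by blast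
  qed
  have "Z ` {1..l} \<subseteq> g1_V l" "independent (g1_E l) (Z ` {1..l})"
    unfolding independent_def by auto
  moreover have "card (Z ` {1..l}) = l" by (simp add: card_image inj_on_def)
  ultimately have "l \<in> ?A" by (intro CollectI exI[of _ "Z ` {1..l}"]) simp
  moreover have "\<forall>x\<in>?A. x \<le> l"
  proof
    fix x assume "x \<in> ?A"
    then obtain S where "x = card S" "S \<subseteq> g1_V l" "independent (g1_E l) S" by blast
    then show "x \<le> l" using g1_indep_le[OF assms] by simp
  qed
  ultimately show ?thesis unfolding independence_number_def
    by (intro Max_eqI[OF fin]) auto
qed

lemma g1_omega: assumes "l \<ge> 2" shows "clique_number (g1_V l) (g1_E l) = l"
proof -
  let ?A = "{card S | S. S \<subseteq> g1_V l \<and> clique (g1_E l) S}"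
  have fin: "finite ?A"
  proof -
    have "?A \<subseteq> card ` Pow (g1_V l)" by auto
    moreover have "finite (g1_V l)" unfolding g1_V_def by simp
    ultimately show ?thesis using finite_subset by blast
  qed
  have "Q ` {1..l} \<subseteq> g1_V l" "clique (g1_E l) (Q ` {1..l})"
    unfolding clique_def by auto
  moreover have "card (Q ` {1..l}) = l" by (simp add: card_image inj_on_def)
  ultimately have "l \<in> ?A" by (intro CollectI exI[of _ "Q ` {1..l}"]) simp
  moreover have "\<forall>x\<in>?A. x \<le> l"
  proof
    fix x assume "x \<in> ?A"
    then obtain S where "x = card S" "S \<subseteq> g1_V l" "clique (g1_E l) S" by blast
    then show "x \<le> l" using g1_clique_le[OF assms] by simp
  qed
  ultimately show ?thesis unfolding clique_number_def
    by (intro Max_eqI[OF fin]) auto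
qed

lemma iso_transfer:
  assumes P: "\<And>T. T \<subseteq> V \<Longrightarrow> P E T \<longleftrightarrow> P' E' (f ` T)"
    and f: "bij_betw f V V'"
  shows "{card S | S. S \<subseteq> V \<and> P E S} = {card S | S. S \<subseteq> V' \<and> P' E' S}"
proof (intro set_eqI iffI)
  fix k assume "k \<in> {card S | S. S \<subseteq> V \<and> P E S}"
  then obtain S where S: "k = card S" "S \<subseteq> V" "P E S" by blast
  have injV: "inj_on f V" using f by (simp add: bij_betw_def)
  have "inj_on f S" using inj_on_subset[OF injV S(2)] .
  then have "card (f ` S) = card S" by (rule card_image)
  moreover have "f ` S \<subseteq> V'" using f S(2) bij_betw_imp_surj_on by blast
  moreover have "P' E' (f ` S)" using S(3) by (rule P[OF S(2), THEN iffD1])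
  ultimately have "k = card (f ` S) \<and> f ` S \<subseteq> V' \<and> P' E' (f ` S)" using S(1) by simp
  then show "k \<in> {card S | S. S \<subseteq> V' \<and> P' E' S}" by (intro CollectI exI[of _ "f ` S"])
next
  fix k assume "k \<in> {card S | S. S \<subseteq> V' \<and> P' E' S}"
  then obtain S where S: "k = card S" "S \<subseteq> V'" "P' E' S" by blast
  define T where "T = {x \<in> V. f x \<in> S}"
  have TV: "T \<subseteq> V" unfolding T_def by blast
  have fV: "f ` V = V'" using f by (simp add: bij_betw_def)
  have img: "f ` T = S"
  proof
    show "f ` T \<subseteq> S" unfolding T_def by blast
    show "S \<subseteq> f ` T"
    proof
      fix y assume "y \<in> S"
      then have "y \<in> f ` V" using S(2) fV by blast
      then obtain x where "x \<in> V" "y = f x" by blast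
      then show "y \<in> f ` T" unfolding T_def using \<open>y \<in> S\<close> by blast
    qed
  qed
  have injV: "inj_on f V" using f by (simp add: bij_betw_def)
  have "inj_on f T" using inj_on_subset[OF injV TV] .
  then have "card (f ` T) = card T" by (rule card_image)
  then have "card T = card S" using img by simp
  moreover have "P E T" using S(3) by (rule P[OF TV, unfolded img, THEN iffD2])
  ultimately have "k = card T \<and> T \<subseteq> V \<and> P E T" using S(1) TV by simp
  then show "k \<in> {card S | S. S \<subseteq> V \<and> P E S}" by (intro CollectI exI[of _ T])
qed

lemma iso_numbers:
  assumes "graph_iso V E V' E'"
  shows "independence_number V E = independence_number V' E'"
    "clique_number V E = clique_number V' E'" "card V = card V'"
proof -
  obtain f where f: "bij_betw f V V'" and e: "\<forall>u\<in>V. \<forall>w\<in>V. (u, w) \<in> E \<longleftrightarrow> (f u, f w) \<in> E'"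
    using assms unfolding graph_iso_def by blast
  have inj: "inj_on f V" using f bij_betw_def by blast
  have I: "independent E T \<longleftrightarrow> independent E' (f ` T)" if TV: "T \<subseteq> V" for T
  proof -
    have "independent E' (f ` T) \<longleftrightarrow> (\<forall>u\<in>T. \<forall>w\<in>T. (f u, f w) \<notin> E')"
      unfolding independent_def by blast
    also have "\<dots> \<longleftrightarrow> (\<forall>u\<in>T. \<forall>w\<in>T. (u, w) \<notin> E)" using e TV by blast
    finally show ?thesis unfolding independent_def by simp
  qed
  show "independence_number V E = independence_number V' E'"
    unfolding independence_number_def using iso_transfer[where P=independent and P'=independent and E=E and E'=E' and f=f, OF I f] by simp
  have C: "clique E T \<longleftrightarrow> clique E' (f ` T)" if TV: "T \<subseteq> V" for T
  proof -
    have ne: "u \<noteq> w \<longleftrightarrow> f u \<noteq> f w" if "u \<in> T" "w \<in> T" for u w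
      using inj that TV by (meson inj_on_def subsetD)
    have "clique E' (f ` T) \<longleftrightarrow> (\<forall>u\<in>T. \<forall>w\<in>T. f u \<noteq> f w \<longrightarrow> (f u, f w) \<in> E')"
      unfolding clique_def by blast
    also have "\<dots> \<longleftrightarrow> (\<forall>u\<in>T. \<forall>w\<in>T. u \<noteq> w \<longrightarrow> (f u, f w) \<in> E')" using ne by blast
    also have "\<dots> \<longleftrightarrow> (\<forall>u\<in>T. \<forall>w\<in>T. u \<noteq> w \<longrightarrow> (u, w) \<in> E)" using e TV by blast
    finally show ?thesis unfolding clique_def by simp
  qed
  show "clique_number V E = clique_number V' E'"
    unfolding clique_number_def using iso_transfer[where P=clique and P'=clique and E=E and E'=E' and f=f, OF C f] by simp
  show "card V = card V'" using f bij_betw_same_card by blast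
qed

context crit begin

lemma EV: "(x, y) \<in> E \<Longrightarrow> x \<in> V \<and> y \<in> V" using sub by blast

lemma vcE:
  assumes "x \<in> V"
  obtains a b where "a \<in> V" "b \<in> V" "(a, b) \<in> E" "a \<noteq> x" "b \<noteq> x" "(x, a) \<notin> E" "(x, b) \<notin> E"
    "\<And>z. z \<in> V \<Longrightarrow> z = x \<or> z = a \<or> z = b \<or> (z, a) \<in> E \<or> (z, b) \<in> E"
  using vc[OF assms] by blast

lemma ndE:
  assumes "a \<in> V" "b \<in> V" "a = b \<or> (a, b) \<in> E"
  obtains z where "z \<in> V" "z \<noteq> a" "z \<noteq> b" "(z, a) \<notin> E" "(z, b) \<notin> E"
  using nd[OF assms] by blast

lemma L0:
  assumes ind: "independent E S" and cl: "clique E C" and cov: "V \<subseteq> S \<union> C" and v: "v \<in> C" and CV: "C \<subseteq> V"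
  shows False
proof -
  have indE: "\<And>x y. x \<in> S \<Longrightarrow> y \<in> S \<Longrightarrow> (x, y) \<notin> E" using ind unfolding independent_def by blast
  have clE: "\<And>x y. x \<in> C \<Longrightarrow> y \<in> C \<Longrightarrow> x \<noteq> y \<Longrightarrow> (x, y) \<in> E" using cl unfolding clique_def by blast
  have vV: "v \<in> V" using v CV by blast
  obtain a b where ab: "a \<in> V" "b \<in> V" "(a, b) \<in> E" "a \<noteq> v" "b \<noteq> v" "(v, a) \<notin> E" "(v, b) \<notin> E"
    and dom: "\<And>z. z \<in> V \<Longrightarrow> z = v \<or> z = a \<or> z = b \<or> (z, a) \<in> E \<or> (z, b) \<in> E"
    by (rule vcE[OF vV], rule that)
  have "a \<notin> C" using clE[OF v, of a] ab by blast
  moreover have "b \<notin> C" using clE[OF v, of b] ab by blast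
  ultimately have "a \<in> S" "b \<in> S" using ab cov by blast+
  then show False using indE ab(3) by blast
qed

lemma L1:
  assumes ind: "independent E S" and cl: "clique E C" and SC: "S \<inter> C = {c}"
    and cov: "V \<subseteq> S \<union> C \<union> {r}" and v: "v \<in> C" "v \<noteq> c" and CV: "C \<subseteq> V"
  shows False
proof -
  have indE: "\<And>x y. x \<in> S \<Longrightarrow> y \<in> S \<Longrightarrow> (x, y) \<notin> E" using ind unfolding independent_def by blast
  have clE: "\<And>x y. x \<in> C \<Longrightarrow> y \<in> C \<Longrightarrow> x \<noteq> y \<Longrightarrow> (x, y) \<in> E" using cl unfolding clique_def by blast
  have cC: "c \<in> C" and cS: "c \<in> S" using SC by auto
  have vV: "v \<in> V" using v CV by blast
  obtain a b where ab: "a \<in> V" "b \<in> V" "(a, b) \<in> E" "a \<noteq> v" "b \<noteq> v" "(v, a) \<notin> E" "(v, b) \<notin> E"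
    and dom: "\<And>z. z \<in> V \<Longrightarrow> z = v \<or> z = a \<or> z = b \<or> (z, a) \<in> E \<or> (z, b) \<in> E"
    by (rule vcE[OF vV], rule that)
  have "a \<notin> C" using clE[OF v(1), of a] ab by blast
  moreover have "b \<notin> C" using clE[OF v(1), of b] ab by blast
  ultimately have aS: "a \<in> S \<or> a = r" and bS: "b \<in> S \<or> b = r" using ab cov by blast+
  have "c = v \<or> c = a \<or> c = b \<or> (c, a) \<in> E \<or> (c, b) \<in> E" using dom[of c] cC CV by blast
  then have cr: "(c, r) \<in> E" using aS bS indE[OF cS] v(2) \<open>a \<notin> C\<close> \<open>b \<notin> C\<close> cC by blast
  have cV: "c \<in> V" using cC CV by blast
  obtain a' b' where ab': "a' \<in> V" "b' \<in> V" "(a', b') \<in> E" "a' \<noteq> c" "b' \<noteq> c" "(c, a') \<notin> E" "(c, b') \<notin> E"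
    and dom': "\<And>z. z \<in> V \<Longrightarrow> z = c \<or> z = a' \<or> z = b' \<or> (z, a') \<in> E \<or> (z, b') \<in> E"
    by (rule vcE[OF cV], rule that)
  have "a' \<notin> C" using clE[OF cC, of a'] ab' by blast
  moreover have "b' \<notin> C" using clE[OF cC, of b'] ab' by blast
  ultimately have "a' \<in> S \<or> a' = r" "b' \<in> S \<or> b' = r" using ab' cov by blast+
  then show False using indE ab' cr by blast
qed

end

context crit begin

lemma L2:
  assumes ind: "independent E S" and cl: "clique E C" and SV: "S \<subseteq> V" and CV: "C \<subseteq> V"
    and disj: "S \<inter> C = {}" and rV: "r \<in> V" and rS: "r \<notin> S" and rC: "r \<notin> C"
    and cov: "V = S \<union> C \<union> {r}" and C2: "card C \<ge> 2"
  shows "in_G1 (card C) V E"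
proof -
  have indE: "\<And>x y. x \<in> S \<Longrightarrow> y \<in> S \<Longrightarrow> (x, y) \<notin> E" using ind unfolding independent_def by blast
  have clE: "\<And>x y. x \<in> C \<Longrightarrow> y \<in> C \<Longrightarrow> x \<noteq> y \<Longrightarrow> (x, y) \<in> E" using cl unfolding clique_def by blast
  have finC: "finite C" using fin CV finite_subset by blast
  have dSC: "\<And>x. x \<in> S \<Longrightarrow> x \<in> C \<Longrightarrow> False" using disj by blast
  have Dv: "\<exists>s. s \<in> S \<and> (r, s) \<in> E \<and> (v, r) \<notin> E \<and> (v, s) \<notin> E \<and>
      (\<forall>z\<in>V. z = v \<or> z = r \<or> z = s \<or> (z, r) \<in> E \<or> (z, s) \<in> E)" if v: "v \<in> C" for v
  proof -
    have vV: "v \<in> V" using v CV by blast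
    obtain a b where ab: "a \<in> V" "b \<in> V" "(a, b) \<in> E" "a \<noteq> v" "b \<noteq> v" "(v, a) \<notin> E" "(v, b) \<notin> E"
      and dom: "\<And>z. z \<in> V \<Longrightarrow> z = v \<or> z = a \<or> z = b \<or> (z, a) \<in> E \<or> (z, b) \<in> E"
      by (rule vcE[OF vV], rule that)
    have "a \<notin> C" using clE[OF v, of a] ab by blast
    moreover have "b \<notin> C" using clE[OF v, of b] ab by blast
    ultimately have aS: "a \<in> S \<or> a = r" and bS: "b \<in> S \<or> b = r" using ab cov by blast+
    show ?thesis
    proof (cases "a = r")
      case True
      then have "b \<noteq> r" using ab(3) irr by blast
      then have "b \<in> S" using bS by blast
      then show ?thesis using True ab dom by blast
    next
      case False
      then have "a \<in> S" using aS by blast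
      then have "b = r" using bS indE ab(3) by blast
      then have "(r, a) \<in> E" using symm ab(3) by blast
      then show ?thesis using \<open>b = r\<close> \<open>a \<in> S\<close> ab dom by blast
    qed
  qed
  then have "\<forall>v\<in>C. \<exists>s. s \<in> S \<and> (r, s) \<in> E \<and> (v, r) \<notin> E \<and> (v, s) \<notin> E \<and>
      (\<forall>z\<in>V. z = v \<or> z = r \<or> z = s \<or> (z, r) \<in> E \<or> (z, s) \<in> E)" by blast
  from bchoice[OF this] obtain \<sigma> where \<sigma>: "\<forall>v\<in>C. \<sigma> v \<in> S \<and> (r, \<sigma> v) \<in> E \<and> (v, r) \<notin> E \<and> (v, \<sigma> v) \<notin> E \<and>
      (\<forall>z\<in>V. z = v \<or> z = r \<or> z = \<sigma> v \<or> (z, r) \<in> E \<or> (z, \<sigma> v) \<in> E)" by blast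
  have \<sigma>S: "\<And>v. v \<in> C \<Longrightarrow> \<sigma> v \<in> S" and r\<sigma>: "\<And>v. v \<in> C \<Longrightarrow> (r, \<sigma> v) \<in> E"
    and vr: "\<And>v. v \<in> C \<Longrightarrow> (v, r) \<notin> E" and v\<sigma>: "\<And>v. v \<in> C \<Longrightarrow> (v, \<sigma> v) \<notin> E"
    and \<sigma>dom: "\<And>v z. v \<in> C \<Longrightarrow> z \<in> V \<Longrightarrow> z = v \<or> z = r \<or> z = \<sigma> v \<or> (z, r) \<in> E \<or> (z, \<sigma> v) \<in> E"
    using \<sigma> by blast+
  have rv: "\<And>v. v \<in> C \<Longrightarrow> (r, v) \<notin> E" using vr symm by blast
  obtain v0 where v0: "v0 \<in> C" using C2 by fastforce
  have rSE: "(r, t) \<in> E" if t: "t \<in> S" for t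
  proof (cases "t = \<sigma> v0")
    case True then show ?thesis using r\<sigma>[OF v0] by simp
  next
    case False
    have "t \<noteq> v0" using t v0 disj by blast
    moreover have "t \<noteq> r" using t rS by blast
    moreover have "(t, \<sigma> v0) \<notin> E" using indE[OF t \<sigma>S[OF v0]] .
    moreover have "t \<in> V" using t SV by blast
    ultimately have "(t, r) \<in> E" using \<sigma>dom[OF v0, of t] False by blast
    then show ?thesis using symm by blast
  qed
  have \<sigma>adj: "(w, \<sigma> v) \<in> E" if "v \<in> C" "w \<in> C" "w \<noteq> v" for v w
  proof -
    have "w \<noteq> r" using that rC by blast
    moreover have "w \<noteq> \<sigma> v" using \<sigma>S[OF that(1)] that(2) disj by blast
    moreover have "w \<in> V" using that CV by blast
    ultimately show ?thesis using \<sigma>dom[OF that(1), of w] vr[OF that(2)] that(3) by blast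
  qed
  have inj\<sigma>: "inj_on \<sigma> C"
  proof (rule inj_onI)
    fix v w assume "v \<in> C" "w \<in> C" "\<sigma> v = \<sigma> w"
    then show "v = w" using \<sigma>adj[of w v] v\<sigma>[of v] by metis
  qed
  have nbrS: "x \<in> S" if "(r, x) \<in> E" for x
  proof -
    have "x \<in> V" using EV[OF that] by blast
    moreover have "x \<noteq> r" using that irr by blast
    moreover have "x \<notin> C" using that rv by blast
    ultimately show ?thesis using cov by blast
  qed
  have surj: "\<sigma> ` C = S"
  proof
    show "\<sigma> ` C \<subseteq> S" using \<sigma>S by blast
    show "S \<subseteq> \<sigma> ` C"
    proof
      fix t assume t: "t \<in> S"
      show "t \<in> \<sigma> ` C"
      proof (rule ccontr)
        assume nt: "t \<notin> \<sigma> ` C"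
        have tV: "t \<in> V" using t SV by blast
        obtain a b where ab: "a \<in> V" "b \<in> V" "(a, b) \<in> E" "a \<noteq> t" "b \<noteq> t" "(t, a) \<notin> E" "(t, b) \<notin> E"
          and dom: "\<And>z. z \<in> V \<Longrightarrow> z = t \<or> z = a \<or> z = b \<or> (z, a) \<in> E \<or> (z, b) \<in> E"
          by (rule vcE[OF tV], rule that)
        have tr: "(t, r) \<in> E" using rSE[OF t] symm by blast
        have key: False if H: "(a', b') \<in> E" "(t, b') \<notin> E" "(r, a') \<in> E" "b' \<in> V"
          "\<And>z. z \<in> V \<Longrightarrow> z = t \<or> z = a' \<or> z = b' \<or> (z, a') \<in> E \<or> (z, b') \<in> E" for a' b'
        proof -
          have aS: "a' \<in> S" using nbrS[OF H(3)] .
          have "b' \<notin> S" using indE[OF aS] H(1) by blast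
          moreover have "b' \<noteq> r" using H(2) tr by blast
          ultimately have bC: "b' \<in> C" using H(4) cov by blast
          have sV: "\<sigma> b' \<in> V" using \<sigma>S[OF bC] SV by blast
          have "\<sigma> b' \<noteq> t" using nt bC by blast
          moreover have "\<sigma> b' \<noteq> a'" using v\<sigma>[OF bC] H(1) symm by blast
          moreover have "\<sigma> b' \<noteq> b'" using dSC[OF \<sigma>S[OF bC]] bC by metis
          moreover have "(\<sigma> b', a') \<notin> E" using indE[OF \<sigma>S[OF bC] aS] .
          moreover have "(\<sigma> b', b') \<notin> E" using v\<sigma>[OF bC] symm by blast
          ultimately show False using H(5)[OF sV] by blast
        qed
        have "r \<noteq> t" using t rS by blast
        moreover have "r \<noteq> a" using ab(6) tr by blast
        moreover have "r \<noteq> b" using ab(7) tr by blast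
        ultimately have "(r, a) \<in> E \<or> (r, b) \<in> E" using dom[OF rV] symm by blast
        then show False
        proof
          assume "(r, a) \<in> E"
          then show False using key[of a b] ab dom by blast
        next
          assume "(r, b) \<in> E"
          moreover have "(b, a) \<in> E" using ab(3) symm by blast
          moreover have "\<And>z. z \<in> V \<Longrightarrow> z = t \<or> z = b \<or> z = a \<or> (z, b) \<in> E \<or> (z, a) \<in> E"
            using dom by blast
          ultimately show False using key[of b a] ab by blast
        qed
      qed
    qed
  qed
  define l where "l = card C"
  obtain p where p: "bij_betw p C {1..l}"
    using finite_same_card_bij[OF finC, of "{1..l}"] unfolding l_def by auto
  have injp: "inj_on p C" and pC: "p ` C = {1..l}" using p unfolding bij_betw_def by auto
  define \<tau> where "\<tau> = inv_into C \<sigma>"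
  have \<tau>C: "\<tau> s \<in> C" if "s \<in> S" for s using that surj unfolding \<tau>_def by (metis inv_into_into)
  have \<sigma>\<tau>: "\<sigma> (\<tau> s) = s" if "s \<in> S" for s using that surj unfolding \<tau>_def by (metis f_inv_into_f)
  have \<tau>\<sigma>: "\<tau> (\<sigma> v) = v" if "v \<in> C" for v using that inj\<sigma> unfolding \<tau>_def by (metis inv_into_f_f)
  define f where "f x = (if x = r then Vtx else if x \<in> C then Q (p x) else Z (p (\<tau> x)))" for x
  have fr: "f r = Vtx" unfolding f_def by simp
  have fC: "f x = Q (p x)" if "x \<in> C" for x using that rC unfolding f_def by auto
  have fS: "f x = Z (p (\<tau> x))" if "x \<in> S" for x using that rS disj unfolding f_def by auto
  have pin: "p x \<in> {1..l}" if "x \<in> C" for x using that pC by blast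
  have Vcases: "x = r \<or> x \<in> C \<or> x \<in> S" if "x \<in> V" for x using that cov by blast
  have injf: "inj_on f V"
  proof (rule inj_onI)
    fix x y assume x: "x \<in> V" and y: "y \<in> V" and fxy: "f x = f y"
    show "x = y"
      using Vcases[OF x]
    proof (elim disjE)
      assume "x = r" then show ?thesis using Vcases[OF y] fxy fr fC fS by auto
    next
      assume xC: "x \<in> C"
      then show ?thesis using Vcases[OF y] fxy fr fC fS injp
        by (auto simp: inj_on_def)
    next
      assume xS: "x \<in> S"
      have "y \<in> S" using Vcases[OF y] fxy fr fC fS xS by auto
      then have "p (\<tau> x) = p (\<tau> y)" using fxy fS xS by auto
      then have "\<tau> x = \<tau> y" using injp \<tau>C xS \<open>y \<in> S\<close> by (auto simp: inj_on_def)
      then show ?thesis using \<sigma>\<tau> xS \<open>y \<in> S\<close> by metis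
    qed
  qed
  have imgf: "f ` V = g1_V l"
  proof
    show "f ` V \<subseteq> g1_V l"
    proof
      fix y assume "y \<in> f ` V"
      then obtain x where x: "x \<in> V" "y = f x" by blast
      then show "y \<in> g1_V l" using Vcases[OF x(1)] fr fC fS pin \<tau>C by auto
    qed
    show "g1_V l \<subseteq> f ` V"
    proof
      fix y assume y: "y \<in> g1_V l"
      show "y \<in> f ` V"
      proof (cases y)
        case Vtx then show ?thesis using fr rV by force
      next
        case (Q i)
        then have "i \<in> p ` C" using y pC by simp
        then obtain c where "c \<in> C" "i = p c" by blast
        then show ?thesis using Q fC CV by force
      next
        case (Z i)
        then have "i \<in> p ` C" using y pC by simp
        then obtain c where c: "c \<in> C" "i = p c" by blast
        then have "f (\<sigma> c) = Z i" using fS[OF \<sigma>S[OF c(1)]] \<tau>\<sigma>[OF c(1)] by simp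
        moreover have "\<sigma> c \<in> V" using \<sigma>S[OF c(1)] SV by blast
        ultimately show ?thesis using Z by force
      qed
    qed
  qed
  have CSadj: "(u, w) \<in> E \<longleftrightarrow> u \<noteq> \<tau> w" if "u \<in> C" "w \<in> S" for u w
  proof
    assume "(u, w) \<in> E"
    then show "u \<noteq> \<tau> w" using v\<sigma>[OF that(1)] \<sigma>\<tau>[OF that(2)] by metis
  next
    assume "u \<noteq> \<tau> w"
    then show "(u, w) \<in> E" using \<sigma>adj[OF \<tau>C[OF that(2)] that(1)] \<sigma>\<tau>[OF that(2)] by simp
  qed
  have edges: "(u, w) \<in> E \<longleftrightarrow> (f u, f w) \<in> g1_E l" if u: "u \<in> V" and w: "w \<in> V" for u w
    using Vcases[OF u]
  proof (elim disjE)
    assume ur: "u = r"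
    show ?thesis using Vcases[OF w]
    proof (elim disjE)
      assume "w = r" then show ?thesis using ur fr irr by simp
    next
      assume "w \<in> C" then show ?thesis using ur fr fC rv by simp
    next
      assume wS: "w \<in> S" then show ?thesis using ur fr fS rSE pin \<tau>C by simp
    qed
  next
    assume uC: "u \<in> C"
    show ?thesis using Vcases[OF w]
    proof (elim disjE)
      assume "w = r" then show ?thesis using uC fr fC vr by simp
    next
      assume wC: "w \<in> C"
      have "(u, w) \<in> E \<longleftrightarrow> u \<noteq> w" using clE[OF uC wC] irr by blast
      moreover have "u \<noteq> w \<longleftrightarrow> p u \<noteq> p w" using injp uC wC by (auto simp: inj_on_def)
      ultimately show ?thesis using fC[OF uC] fC[OF wC] pin[OF uC] pin[OF wC] by simp
    next
      assume wS: "w \<in> S"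
      have "u \<noteq> \<tau> w \<longleftrightarrow> p u \<noteq> p (\<tau> w)" using injp uC \<tau>C[OF wS] by (auto simp: inj_on_def)
      then show ?thesis using CSadj[OF uC wS] fC[OF uC] fS[OF wS] pin[OF uC] pin[OF \<tau>C[OF wS]] by auto
    qed
  next
    assume uS: "u \<in> S"
    show ?thesis using Vcases[OF w]
    proof (elim disjE)
      assume wr: "w = r"
      have "(u, w) \<in> E" using rSE[OF uS] symm wr by blast
      moreover have "(f u, f w) \<in> g1_E l" using fS[OF uS] fr wr pin[OF \<tau>C[OF uS]] by simp
      ultimately show ?thesis by blast
    next
      assume wC: "w \<in> C"
      have "(u, w) \<in> E \<longleftrightarrow> (w, u) \<in> E" using symm by blast
      moreover have "w \<noteq> \<tau> u \<longleftrightarrow> p w \<noteq> p (\<tau> u)" using injp wC \<tau>C[OF uS] by (auto simp: inj_on_def)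
      ultimately show ?thesis using CSadj[OF wC uS] fC[OF wC] fS[OF uS] pin[OF wC] pin[OF \<tau>C[OF uS]] by auto
    next
      assume wS: "w \<in> S" then show ?thesis using uS fS indE by simp
    qed
  qed
  have "bij_betw f V (g1_V l)" using injf imgf unfolding bij_betw_def by blast
  then show ?thesis unfolding in_G1_def graph_iso_def l_def[symmetric] using edges by blast
qed

end

context crit begin

lemma L3:
  assumes ind: "independent E S" and cl: "clique E C" and SV: "S \<subseteq> V" and CV: "C \<subseteq> V"
    and SC: "S \<inter> C = {c}" and raV: "ra \<in> V" and rbV: "rb \<in> V" and rab: "ra \<noteq> rb"
    and ran: "ra \<notin> S" "ra \<notin> C" and rbn: "rb \<notin> S" "rb \<notin> C"
    and cov: "V = S \<union> C \<union> {ra, rb}" and C2: "card C \<ge> 2"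
  shows "\<exists>S' C' r. independent E S' \<and> clique E C' \<and> S' \<subseteq> V \<and> C' \<subseteq> V \<and> S' \<inter> C' = {} \<and>
           r \<in> V \<and> r \<notin> S' \<and> r \<notin> C' \<and> V = S' \<union> C' \<union> {r} \<and> card C' = card C"
proof -
  have indE: "\<And>x y. x \<in> S \<Longrightarrow> y \<in> S \<Longrightarrow> (x, y) \<notin> E" using ind unfolding independent_def by blast
  have clE: "\<And>x y. x \<in> C \<Longrightarrow> y \<in> C \<Longrightarrow> x \<noteq> y \<Longrightarrow> (x, y) \<in> E" using cl unfolding clique_def by blast
  have cC: "c \<in> C" and cS: "c \<in> S" using SC by auto
  have cV: "c \<in> V" using cC CV by blast
  have SCc: "\<And>x. x \<in> S \<Longrightarrow> x \<in> C \<Longrightarrow> x = c" using SC by blast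
  have finC: "finite C" using fin CV finite_subset by blast
  obtain v0 where v0: "v0 \<in> C" "v0 \<noteq> c"
  proof -
    have "C - {c} \<noteq> {}"
    proof
      assume "C - {c} = {}"
      then have "C \<subseteq> {c}" by blast
      then have "card C \<le> 1" using card_mono[of "{c}" C] by simp
      then show False using C2 by simp
    qed
    then show ?thesis using that by blast
  qed
  have notC: "x \<notin> C" if "(y, x) \<notin> E" "x \<noteq> y" "y \<in> C" for x y
    using clE[OF that(3), of x] that by blast
  have step1: "\<exists>r2 s0. (r2 = ra \<or> r2 = rb) \<and> s0 \<in> S \<and> s0 \<noteq> c \<and> (r2, s0) \<in> E \<and> (c, r2) \<notin> E \<and>
      (\<forall>z\<in>V. z = c \<or> z = r2 \<or> z = s0 \<or> (z, r2) \<in> E \<or> (z, s0) \<in> E)"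
  proof -
    obtain a b where ab: "a \<in> V" "b \<in> V" "(a, b) \<in> E" "a \<noteq> c" "b \<noteq> c" "(c, a) \<notin> E" "(c, b) \<notin> E"
      and dom: "\<And>z. z \<in> V \<Longrightarrow> z = c \<or> z = a \<or> z = b \<or> (z, a) \<in> E \<or> (z, b) \<in> E"
      by (rule vcE[OF cV], rule that)
    have aC: "a \<notin> C" using notC[OF ab(6) ab(4) cC] .
    have bC: "b \<notin> C" using notC[OF ab(7) ab(5) cC] .
    have aS: "a \<in> S \<or> a = ra \<or> a = rb" using ab(1) aC cov by blast
    have bS: "b \<in> S \<or> b = ra \<or> b = rb" using ab(2) bC cov by blast
    have notboth: False if "a = ra \<or> a = rb" "b = ra \<or> b = rb"
    proof -
      have v0V: "v0 \<in> V" using v0 CV by blast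
      obtain a' b' where ab': "a' \<in> V" "b' \<in> V" "(a', b') \<in> E" "a' \<noteq> v0" "b' \<noteq> v0" "(v0, a') \<notin> E" "(v0, b') \<notin> E"
        and dom': "\<And>z. z \<in> V \<Longrightarrow> z = v0 \<or> z = a' \<or> z = b' \<or> (z, a') \<in> E \<or> (z, b') \<in> E"
        by (rule vcE[OF v0V], rule that)
      have a'C: "a' \<notin> C" using notC[OF ab'(6) ab'(4) v0(1)] .
      have b'C: "b' \<notin> C" using notC[OF ab'(7) ab'(5) v0(1)] .
      have c1: "(c, a') \<in> E \<or> (c, b') \<in> E" using dom'[OF cV] v0(2) a'C b'C cC by blast
      have "a \<noteq> b" using ab(3) irr by blast
      then have "(ra = a \<or> ra = b) \<and> (rb = a \<or> rb = b)" using that rab by auto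
      then have c2: "(c, ra) \<notin> E \<and> (c, rb) \<notin> E" using ab(6,7) by auto
      have c3: "a' \<in> S \<or> a' = ra \<or> a' = rb" using ab'(1) a'C cov by blast
      have c4: "b' \<in> S \<or> b' = ra \<or> b' = rb" using ab'(2) b'C cov by blast
      from c1 c2 c3 c4 show False using indE[OF cS] by blast
    qed
    show ?thesis
    proof (cases "a \<in> S")
      case True
      then have "b \<notin> S" using indE ab(3) by blast
      then have "b = ra \<or> b = rb" using bS by blast
      moreover have "(b, a) \<in> E" using symm[OF ab(3)] .
      moreover have "\<forall>z\<in>V. z = c \<or> z = b \<or> z = a \<or> (z, b) \<in> E \<or> (z, a) \<in> E" using dom by blast
      ultimately show ?thesis using True ab by blast
    next
      case False
      then have ar: "a = ra \<or> a = rb" using aS by blast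
      then have "b \<in> S" using bS notboth by blast
      moreover have "\<forall>z\<in>V. z = c \<or> z = a \<or> z = b \<or> (z, a) \<in> E \<or> (z, b) \<in> E" using dom by blast
      ultimately show ?thesis using ar ab by blast
    qed
  qed
  then obtain r2 s0 where r2: "r2 = ra \<or> r2 = rb" and s0: "s0 \<in> S" "s0 \<noteq> c" and r2s0: "(r2, s0) \<in> E"
    and cr2: "(c, r2) \<notin> E" and domc: "\<forall>z\<in>V. z = c \<or> z = r2 \<or> z = s0 \<or> (z, r2) \<in> E \<or> (z, s0) \<in> E"
    by blast
  define r1 where "r1 = (if r2 = ra then rb else ra)"
  have r12: "r1 \<noteq> r2" "(r1 = ra \<and> r2 = rb) \<or> (r1 = rb \<and> r2 = ra)" using r2 rab unfolding r1_def by auto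
  have r1V: "r1 \<in> V" and r2V: "r2 \<in> V" using r12 raV rbV by blast+
  have r1n: "r1 \<notin> S" "r1 \<notin> C" and r2n: "r2 \<notin> S" "r2 \<notin> C" using r12 ran rbn by blast+
  have cov2: "V = S \<union> C \<union> {r1, r2}" using cov r12(2) by auto
  have Dx: "\<exists>y. y \<in> V \<and> y \<notin> C \<and> y \<noteq> x \<and> (r1, y) \<in> E \<and> (x, r1) \<notin> E \<and> (x, y) \<notin> E \<and> (c, r1) \<in> E \<and>
      (\<forall>z\<in>V. z = x \<or> z = r1 \<or> z = y \<or> (z, r1) \<in> E \<or> (z, y) \<in> E)" if x: "x \<in> C" "x \<noteq> c" for x
  proof -
    have xV: "x \<in> V" using x CV by blast
    obtain a b where ab: "a \<in> V" "b \<in> V" "(a, b) \<in> E" "a \<noteq> x" "b \<noteq> x" "(x, a) \<notin> E" "(x, b) \<notin> E"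
      and dom: "\<And>z. z \<in> V \<Longrightarrow> z = x \<or> z = a \<or> z = b \<or> (z, a) \<in> E \<or> (z, b) \<in> E"
      by (rule vcE[OF xV], rule that)
    have aC: "a \<notin> C" using notC[OF ab(6) ab(4) x(1)] .
    have bC: "b \<notin> C" using notC[OF ab(7) ab(5) x(1)] .
    have cnb: "c \<noteq> a" "c \<noteq> b" using aC bC cC by blast+
    have cr: "q = r1" if "(c, q) \<in> E" "q \<notin> C" "q \<in> V" for q
    proof -
      have "q \<notin> S" using indE[OF cS] that(1) by blast
      moreover have "q \<noteq> r2" using cr2 that(1) by blast
      ultimately show ?thesis using that(2,3) cov2 by blast
    qed
    have "(c, a) \<in> E \<or> (c, b) \<in> E" using dom[OF cV] x(2) cnb by blast
    then show ?thesis
    proof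
      assume ca: "(c, a) \<in> E"
      then have "a = r1" using cr aC ab(1) by blast
      then show ?thesis using ab bC ca dom by blast
    next
      assume cb: "(c, b) \<in> E"
      then have "b = r1" using cr bC ab(2) by blast
      moreover have "(b, a) \<in> E" using symm[OF ab(3)] .
      moreover have "\<forall>z\<in>V. z = x \<or> z = b \<or> z = a \<or> (z, b) \<in> E \<or> (z, a) \<in> E" using dom by blast
      ultimately show ?thesis using ab aC cb by blast
    qed
  qed
  have cr1: "(c, r1) \<in> E" using Dx[OF v0] by blast
  have r1C: "(x, r1) \<notin> E" "(r1, x) \<notin> E" if "x \<in> C" "x \<noteq> c" for x
    using Dx[OF that] symm by blast+
  have r2S: "(r2, t) \<in> E" if t: "t \<in> S" "t \<noteq> c" for t
  proof (cases "t = s0")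
    case True then show ?thesis using r2s0 by simp
  next
    case False
    have "t \<in> V" using t SV by blast
    moreover have "t \<noteq> r2" using t r2n by blast
    moreover have "(t, s0) \<notin> E" using indE[OF t(1) s0(1)] .
    ultimately have "(t, r2) \<in> E" using domc t(2) False by blast
    then show ?thesis using symm by blast
  qed
  have r1N: "q = c \<or> q \<in> S \<or> q = r2" if "(r1, q) \<in> E" for q
  proof -
    have "q \<in> V" using EV[OF that] by blast
    moreover have "q \<noteq> r1" using that irr by blast
    moreover have "q \<notin> C - {c}" using r1C that by blast
    ultimately show ?thesis using cov2 by blast
  qed
  have dich: "(\<forall>v\<in>C. v \<noteq> c \<longrightarrow> (r2, v) \<in> E) \<or> (\<forall>s\<in>S. s \<noteq> c \<longrightarrow> (r1, s) \<notin> E)"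
  proof (rule ccontr)
    assume "\<not> ?thesis"
    then obtain v s where v: "v \<in> C" "v \<noteq> c" "(r2, v) \<notin> E" and s: "s \<in> S" "s \<noteq> c" "(r1, s) \<in> E" by blast
    have vV: "v \<in> V" using v CV by blast
    have sV: "s \<in> V" using s SV by blast
    have sC: "s \<notin> C" using s SCc by blast
    obtain y where y: "y \<in> V" "y \<notin> C" "y \<noteq> v" "(r1, y) \<in> E" "(v, r1) \<notin> E" "(v, y) \<notin> E"
      and domv: "\<forall>z\<in>V. z = v \<or> z = r1 \<or> z = y \<or> (z, r1) \<in> E \<or> (z, y) \<in> E"
      using Dx[OF v(1,2)] by blast
    have "y \<noteq> r1" using y(4) irr by blast
    then have ycases: "y = r2 \<or> (y \<in> S \<and> y \<noteq> c)" using y(1,2) cov2 cC by blast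
    show False
      using ycases
    proof (elim disjE)
      assume yr2: "y = r2"
      have r12E: "(r1, r2) \<in> E" using y(4) yr2 by simp
      have r2C: "(w, r2) \<in> E" if "w \<in> C" "w \<noteq> c" "w \<noteq> v" for w
      proof -
        have "w \<in> V" using that CV by blast
        moreover have "w \<noteq> r1" "w \<noteq> r2" using that r1n r2n by blast+
        moreover have "(w, r1) \<notin> E" using r1C that by blast
        ultimately show ?thesis using domv that(3) yr2 by blast
      qed
      obtain a b where ab: "a \<in> V" "b \<in> V" "(a, b) \<in> E" "a \<noteq> r2" "b \<noteq> r2" "(r2, a) \<notin> E" "(r2, b) \<notin> E"
        and dom: "\<And>z. z \<in> V \<Longrightarrow> z = r2 \<or> z = a \<or> z = b \<or> (z, a) \<in> E \<or> (z, b) \<in> E"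
        by (rule vcE[OF r2V], rule that)
      have cv: "q = c \<or> q = v" if "q \<in> V" "q \<noteq> r2" "(r2, q) \<notin> E" for q
      proof -
        have "q \<notin> S - {c}" using r2S that(3) by blast
        moreover have "q \<noteq> r1" using symm[OF r12E] that(3) by blast
        moreover have "q \<notin> C - {c, v}" using r2C symm that(3) by blast
        ultimately show ?thesis using that(1,2) cov2 by blast
      qed
      have "a \<noteq> b" using ab(3) irr by blast
      then have abcv: "(a = c \<and> b = v) \<or> (a = v \<and> b = c)" using cv[OF ab(1,4,6)] cv[OF ab(2,5,7)] by blast
      have Sv: "(z, v) \<in> E" if "z \<in> S" "z \<noteq> c" for z
      proof -
        have "z \<in> V" using that SV by blast
        moreover have "z \<noteq> r2" using that r2n by blast
        moreover have "z \<noteq> v" using that SCc v by blast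
        moreover have "(z, c) \<notin> E" using indE that cS by blast
        ultimately show ?thesis using dom abcv that(2) by blast
      qed
      have vsE: "v = s \<or> (v, s) \<in> E" using Sv[OF s(1,2)] symm by blast
      obtain z where z: "z \<in> V" "z \<noteq> v" "z \<noteq> s" "(z, v) \<notin> E" "(z, s) \<notin> E"
        by (rule ndE[OF vV sV vsE], rule that)
      have zC: "z \<notin> C" using clE[OF _ v(1)] z(2,4) by blast
      moreover have "z \<notin> S - {c}" using Sv z(4) by blast
      moreover have "z \<noteq> c" using cC zC by blast
      moreover have "z \<noteq> r1" using s(3) z(5) by blast
      moreover have "z \<noteq> r2" using r2S[OF s(1,2)] z(5) by blast
      ultimately show False using z(1) cov2 by blast
    next
      assume yS: "y \<in> S \<and> y \<noteq> c"
      have r1S: "(r1, z) \<in> E" if "z \<in> S" "z \<noteq> c" for z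
      proof (cases "z = y")
        case True then show ?thesis using y(4) by simp
      next
        case False
        have "z \<in> V" using that SV by blast
        moreover have "z \<noteq> v" using that SCc v by blast
        moreover have "z \<noteq> r1" using that r1n by blast
        moreover have "(z, y) \<notin> E" using indE that(1) yS by blast
        ultimately have "(z, r1) \<in> E" using domv False by blast
        then show ?thesis using symm by blast
      qed
      show False
      proof (cases "(r1, r2) \<in> E")
        case True
        obtain a b where ab: "a \<in> V" "b \<in> V" "(a, b) \<in> E" "a \<noteq> r2" "b \<noteq> r2" "(r2, a) \<notin> E" "(r2, b) \<notin> E"
          and dom: "\<And>z. z \<in> V \<Longrightarrow> z = r2 \<or> z = a \<or> z = b \<or> (z, a) \<in> E \<or> (z, b) \<in> E"
          by (rule vcE[OF r2V], rule that)
        have inC: "q \<in> C" if "q \<in> V" "q \<noteq> r2" "(r2, q) \<notin> E" for q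
        proof -
          have "q \<notin> S - {c}" using r2S that(3) by blast
          moreover have "q \<noteq> r1" using symm[OF True] that(3) by blast
          ultimately show ?thesis using that(1,2) cov2 cC by blast
        qed
        have aC: "a \<in> C" using inC[OF ab(1,4,6)] .
        have bC: "b \<in> C" using inC[OF ab(2,5,7)] .
        have W: False if w: "w \<in> C" "w \<noteq> c"
          and dw: "\<And>z. z \<in> V \<Longrightarrow> z = r2 \<or> z = c \<or> z = w \<or> (z, c) \<in> E \<or> (z, w) \<in> E" for w
        proof -
          have Sw: "(z, w) \<in> E" if "z \<in> S" "z \<noteq> c" for z
          proof -
            have "z \<in> V" using that SV by blast
            moreover have "z \<noteq> r2" using that r2n by blast
            moreover have "z \<noteq> w" using that SCc w by blast
            moreover have "(z, c) \<notin> E" using indE that cS by blast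
            ultimately show ?thesis using dw that(2) by blast
          qed
          have wV: "w \<in> V" using w CV by blast
          have s0V: "s0 \<in> V" using s0 SV by blast
          have ws0: "w = s0 \<or> (w, s0) \<in> E" using Sw[OF s0] symm by blast
          obtain z where z: "z \<in> V" "z \<noteq> w" "z \<noteq> s0" "(z, w) \<notin> E" "(z, s0) \<notin> E"
            by (rule ndE[OF wV s0V ws0], rule that)
          have zC: "z \<notin> C" using clE[OF _ w(1)] z(2,4) by blast
          moreover have "z \<notin> S - {c}" using Sw z(4) by blast
          moreover have "z \<noteq> c" using cC zC by blast
          moreover have "z \<noteq> r1" using r1S[OF s0] z(5) by blast
          moreover have "z \<noteq> r2" using r2s0 z(5) by blast
          ultimately show False using z(1) cov2 by blast
        qed
        have "r1 \<noteq> a" "r1 \<noteq> b" using aC bC r1n by blast+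
        then have "(r1, a) \<in> E \<or> (r1, b) \<in> E" using dom[OF r1V] r12(1) by blast
        then have "a = c \<or> b = c" using r1C aC bC by blast
        moreover have "a \<noteq> b" using ab(3) irr by blast
        ultimately show False
        proof (elim disjE)
          assume "a = c" then show False using W[of b] bC \<open>a \<noteq> b\<close> dom by blast
        next
          assume "b = c" then show False using W[of a] aC \<open>a \<noteq> b\<close> dom by blast
        qed
      next
        case False
        have vr2: "(v, r2) \<notin> E" using v(3) symm by blast
        have vne: "v \<noteq> r2" using v r2n by blast
        let ?E = "add_edge E v r2"
        have E': "(x, z) \<in> ?E \<longleftrightarrow> (x, z) \<in> E \<or> (x = v \<and> z = r2) \<or> (x = r2 \<and> z = v)" for x z
          unfolding add_edge_def by blast
        obtain a b where ab: "a \<in> V" "b \<in> V" "a = b \<or> (a, b) \<in> ?E"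
          and dom: "\<forall>z\<in>V. z = a \<or> z = b \<or> (z, a) \<in> ?E \<or> (z, b) \<in> ?E"
          using ec[OF vV r2V vne vr2] by blast
        have yV: "y \<in> V" using y by blast
        have yne: "y \<noteq> v" "y \<noteq> r2" using y(3) yS r2n by blast+
        have cne: "c \<noteq> v" "c \<noteq> r2" using v(2) cC r2n by blast+
        have r1ne: "r1 \<noteq> v" "r1 \<noteq> r2" using r1n v(1) r12(1) by blast+
        have K: False if K1: "a'' = v \<or> a'' = r2" and K2: "b'' \<in> V" and K3: "a'' = b'' \<or> (a'', b'') \<in> ?E"
          and K4: "\<forall>z\<in>V. z = a'' \<or> z = b'' \<or> (z, a'') \<in> ?E \<or> (z, b'') \<in> ?E" for a'' b''
          using K1
        proof (elim disjE)
          assume av: "a'' = v"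
          have "y \<noteq> b''"
          proof
            assume "y = b''"
            then have "(v, y) \<in> ?E" using K3 av yne by blast
            then show False using E' y(6) yne by blast
          qed
          moreover have "(y, v) \<notin> ?E" using E' y(6) yne symm by blast
          ultimately have "(y, b'') \<in> ?E" using K4 yV yne av by blast
          then have yb: "(y, b'') \<in> E" using E' yne by blast
          have "r1 \<noteq> b''"
          proof
            assume "r1 = b''"
            then have "(v, r1) \<in> ?E" using K3 av r1ne by blast
            then show False using E' y(5) r1ne by blast
          qed
          moreover have "(r1, v) \<notin> ?E" using E' y(5) r1ne symm by blast
          ultimately have "(r1, b'') \<in> ?E" using K4 r1V r1ne av by blast
          then have r1b: "(r1, b'') \<in> E" using E' r1ne by blast
          then have "b'' = c \<or> b'' \<in> S \<or> b'' = r2" using r1N by blast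
          then show False using r1b yb False indE yS cS by blast
        next
          assume ar: "a'' = r2"
          have cr2': "(r2, c) \<notin> E" using cr2 symm by blast
          have "c \<noteq> b''"
          proof
            assume "c = b''"
            then have "(r2, c) \<in> ?E" using K3 ar cne by blast
            then show False using E' cr2' cne by blast
          qed
          moreover have "(c, r2) \<notin> ?E" using E' cr2 cne by blast
          ultimately have "(c, b'') \<in> ?E" using K4 cV cne ar by blast
          then have cb: "(c, b'') \<in> E" using E' cne by blast
          then have "b'' \<notin> S" "b'' \<noteq> r2" using indE[OF cS] cr2 by blast+
          moreover have "b'' \<noteq> c" using cb irr by blast
          ultimately have bc: "b'' \<in> C - {c} \<or> b'' = r1" using K2 cov2 by blast
          have "b'' \<noteq> r1"
          proof
            assume "b'' = r1"
            then have "(r2, r1) \<in> ?E" using K3 ar r1ne by blast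
            then have "(r2, r1) \<in> E" using E' r1ne by blast
            then show False using False symm by blast
          qed
          then have bC: "b'' \<in> C" "b'' \<noteq> c" using bc by blast+
          have "r1 \<noteq> b''" using bC r1n by blast
          moreover have "(r1, r2) \<notin> ?E" using E' False r1ne by blast
          moreover have "(r1, b'') \<notin> ?E" using E' r1C[OF bC] r1ne by blast
          ultimately show False using K4 r1V r1ne ar by blast
        qed
        have Es: "(x, z) \<in> ?E \<Longrightarrow> (z, x) \<in> ?E" for x z using E' symm by blast
        show False
        proof (cases "a = v \<or> a = r2")
          case True show False by (rule K[OF True ab(2) ab(3) dom])
        next
          case na: False
          show False
          proof (cases "b = v \<or> b = r2")
            case True
            have "b = a \<or> (b, a) \<in> ?E" using ab(3) Es by blast
            moreover have "\<forall>z\<in>V. z = b \<or> z = a \<or> (z, b) \<in> ?E \<or> (z, a) \<in> ?E" using dom by blast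
            ultimately show False using K[OF True ab(1)] by blast
          next
            case nb: False
            have "a = b \<or> (a, b) \<in> E" using ab(3) E' na nb by blast
            moreover have "\<forall>z\<in>V. z = a \<or> z = b \<or> (z, a) \<in> E \<or> (z, b) \<in> E" using dom E' na nb by blast
            ultimately obtain z where "z \<in> V" "z \<noteq> a" "z \<noteq> b" "(z, a) \<notin> E" "(z, b) \<notin> E"
              using nd[OF ab(1,2)] by blast
            then show False using \<open>\<forall>z\<in>V. z = a \<or> z = b \<or> (z, a) \<in> E \<or> (z, b) \<in> E\<close> by blast
          qed
        qed
      qed
    qed
  qed
  from dich show ?thesis
  proof
    assume H: "\<forall>v\<in>C. v \<noteq> c \<longrightarrow> (r2, v) \<in> E"
    define C' where "C' = insert r2 (C - {c})"
    have f1: "independent E S" by (rule ind)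
    have f2: "clique E C'" unfolding clique_def C'_def
    proof (intro ballI impI)
      fix x z assume x: "x \<in> insert r2 (C - {c})" and z: "z \<in> insert r2 (C - {c})" and xz: "x \<noteq> z"
      show "(x, z) \<in> E"
      proof (cases "x = r2")
        case True then show ?thesis using z xz H by blast
      next
        case False
        then have xC: "x \<in> C" "x \<noteq> c" using x by blast+
        show ?thesis
        proof (cases "z = r2")
          case True then show ?thesis using xC H symm by blast
        next
          case False then show ?thesis using z xC xz clE by blast
        qed
      qed
    qed
    have f3: "S \<subseteq> V" by (rule SV)
    have f4: "C' \<subseteq> V" unfolding C'_def using CV r2V by blast
    have f5: "S \<inter> C' = {}" unfolding C'_def using SCc r2n by blast
    have f6: "r1 \<notin> S" "r1 \<notin> C'" unfolding C'_def using r1n r12(1) by blast+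
    have f7: "V = S \<union> C' \<union> {r1}" unfolding C'_def using cov2 cS by blast
    have "card C' = Suc (card (C - {c}))" unfolding C'_def using finC r2n by simp
    also have "\<dots> = card C" using finC cC C2 by simp
    finally have f8: "card C' = card C" .
    have "independent E S \<and> clique E C' \<and> S \<subseteq> V \<and> C' \<subseteq> V \<and> S \<inter> C' = {} \<and>
           r1 \<in> V \<and> r1 \<notin> S \<and> r1 \<notin> C' \<and> V = S \<union> C' \<union> {r1} \<and> card C' = card C"
      using f1 f2 f3 f4 f5 f6 f7 f8 r1V by blast
    show ?thesis by (rule exI[of _ S], rule exI[of _ C'], rule exI[of _ r1], fact)
  next
    assume H: "\<forall>s\<in>S. s \<noteq> c \<longrightarrow> (r1, s) \<notin> E"
    define S' where "S' = insert r1 (S - {c})"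
    have f1: "independent E S'" unfolding independent_def S'_def
    proof (intro ballI)
      fix x z assume x: "x \<in> insert r1 (S - {c})" and z: "z \<in> insert r1 (S - {c})"
      show "(x, z) \<notin> E"
      proof (cases "x = r1")
        case True then show ?thesis using z H irr by blast
      next
        case False
        then have xS: "x \<in> S" "x \<noteq> c" using x by blast+
        show ?thesis
        proof (cases "z = r1")
          case True then show ?thesis using xS H symm by blast
        next
          case False then show ?thesis using z xS indE by blast
        qed
      qed
    qed
    have f2: "clique E C" by (rule cl)
    have f3: "S' \<subseteq> V" unfolding S'_def using SV r1V by blast
    have f5: "S' \<inter> C = {}" unfolding S'_def using SCc r1n by blast
    have f6: "r2 \<notin> S'" "r2 \<notin> C" unfolding S'_def using r2n r12(1) by blast+
    have f7: "V = S' \<union> C \<union> {r2}" unfolding S'_def using cov2 cC by blast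
    have "independent E S' \<and> clique E C \<and> S' \<subseteq> V \<and> C \<subseteq> V \<and> S' \<inter> C = {} \<and>
           r2 \<in> V \<and> r2 \<notin> S' \<and> r2 \<notin> C \<and> V = S' \<union> C \<union> {r2} \<and> card C = card C"
      using f1 f2 f3 CV f5 f6 f7 r2V by blast
    show ?thesis by (rule exI[of _ S'], rule exI[of _ C], rule exI[of _ r2], fact)
  qed
qed

end

theorem theorem3p6:
  fixes V :: "'a set" and E :: "('a \<times> 'a) set"
  assumes "maximal_vertex_critical 3 V E"
  shows "independence_number V E + clique_number V E \<le> card V - 1 \<and>
         (independence_number V E + clique_number V E = card V - 1 \<longleftrightarrow>
            (\<exists>l\<ge>2. in_G1 l V E))"
proof -
  interpret crit V E using mvc_crit[OF assms] .
  define \<alpha> where "\<alpha> = independence_number V E"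
  define \<omega> where "\<omega> = clique_number V E"
  let ?A = "{card S | S. S \<subseteq> V \<and> independent E S}"
  let ?B = "{card S | S. S \<subseteq> V \<and> clique E S}"
  have finA: "finite ?A"
  proof -
    have "?A \<subseteq> card ` Pow V" by blast
    then show ?thesis using fin finite_subset by blast
  qed
  have finB: "finite ?B"
  proof -
    have "?B \<subseteq> card ` Pow V" by blast
    then show ?thesis using fin finite_subset by blast
  qed
  have "independent E {}" unfolding independent_def by blast
  then have "card {} \<in> ?A" by (intro CollectI exI[of _ "{}"]) simp
  then have neA: "?A \<noteq> {}" by blast
  have "clique E {}" unfolding clique_def by blast
  then have "card {} \<in> ?B" by (intro CollectI exI[of _ "{}"]) simp
  then have neB: "?B \<noteq> {}" by blast
  have "\<alpha> \<in> ?A" unfolding \<alpha>_def independence_number_def using Max_in[OF finA neA] .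
  then obtain S where S: "S \<subseteq> V" "independent E S" "card S = \<alpha>" by blast
  have "\<omega> \<in> ?B" unfolding \<omega>_def clique_number_def using Max_in[OF finB neB] .
  then obtain C where C: "C \<subseteq> V" "clique E C" "card C = \<omega>" by blast
  have "\<omega> \<ge> 2"
  proof -
    have "V \<noteq> {}" using big by auto
    then obtain x where x: "x \<in> V" by blast
    have "card (V - {x}) \<ge> 2" using big x fin by simp
    then have "V - {x} \<noteq> {}" by (metis card.empty not_numeral_le_zero)
    then obtain y where y: "y \<in> V" "y \<noteq> x" by blast
    obtain z where z: "z \<in> V" "(x, z) \<in> E" using nbr_exists[OF conn x y(1) y(2)[symmetric]] by blast
    have xz: "x \<noteq> z" using z irr by blast
    have "clique E {x, z}" unfolding clique_def using z(2) symm by blast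
    moreover have "{x, z} \<subseteq> V" using x z by blast
    ultimately have "card {x, z} \<in> ?B" by (intro CollectI exI[of _ "{x, z}"]) simp
    then have "card {x, z} \<le> \<omega>" unfolding \<omega>_def clique_number_def using Max_ge[OF finB] by blast
    then show ?thesis using xz by simp
  qed
  then have C2: "card C \<ge> 2" using C by simp
  have finS: "finite S" and finC: "finite C" using S C fin finite_subset by blast+
  have indE: "\<And>x y. x \<in> S \<Longrightarrow> y \<in> S \<Longrightarrow> (x, y) \<notin> E" using S(2) unfolding independent_def by blast
  have clE: "\<And>x y. x \<in> C \<Longrightarrow> y \<in> C \<Longrightarrow> x \<noteq> y \<Longrightarrow> (x, y) \<in> E" using C(2) unfolding clique_def by blast
  have SCcases: "S \<inter> C = {} \<or> (\<exists>c. S \<inter> C = {c})"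
  proof (cases "S \<inter> C = {}")
    case False
    then obtain c where c: "c \<in> S \<inter> C" by blast
    have "S \<inter> C = {c}"
    proof
      show "S \<inter> C \<subseteq> {c}"
      proof
        fix x assume "x \<in> S \<inter> C"
        then show "x \<in> {c}" using c indE clE by blast
      qed
      show "{c} \<subseteq> S \<inter> C" using c by blast
    qed
    then show ?thesis by blast
  qed simp
  define R where "R = V - (S \<union> C)"
  have finR: "finite R" unfolding R_def using fin by simp
  have cardV: "card V = card (S \<union> C) + card R"
  proof -
    have "V = (S \<union> C) \<union> R" unfolding R_def using S C by blast
    moreover have "(S \<union> C) \<inter> R = {}" unfolding R_def by blast
    ultimately show ?thesis using finS finC finR by (metis card_Un_disjoint finite_UnI)
  qed
  have cardUI: "card (S \<union> C) + card (S \<inter> C) = \<alpha> + \<omega>"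
    using card_Un_Int[OF finS finC] S(3) C(3) by simp
  have main: "\<alpha> + \<omega> \<le> card V - 1 \<and> (\<alpha> + \<omega> = card V - 1 \<longrightarrow> in_G1 \<omega> V E)"
    using SCcases
  proof
    assume SC0: "S \<inter> C = {}"
    have "R \<noteq> {}"
    proof
      assume "R = {}"
      then have "V \<subseteq> S \<union> C" unfolding R_def by blast
      moreover obtain v where "v \<in> C" using C2 by fastforce
      ultimately show False using L0[OF S(2) C(2)] C(1) by blast
    qed
    then have R1: "card R \<ge> 1" using finR by (simp add: Suc_le_eq card_gt_0_iff)
    have sum: "\<alpha> + \<omega> = card (S \<union> C)" using cardUI SC0 by simp
    have le: "\<alpha> + \<omega> \<le> card V - 1" using sum cardV R1 by simp
    have "in_G1 \<omega> V E" if eq: "\<alpha> + \<omega> = card V - 1"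
    proof -
      have "card R = 1" using eq sum cardV R1 by simp
      then obtain r where Rr: "R = {r}" by (metis card_1_singletonE)
      have rV: "r \<in> V" and rS: "r \<notin> S" and rC: "r \<notin> C" using Rr unfolding R_def by blast+
      have cov: "V = S \<union> C \<union> {r}" using Rr S(1) C(1) unfolding R_def by blast
      show ?thesis using L2[OF S(2) C(2) S(1) C(1) SC0 rV rS rC cov C2] C(3) by simp
    qed
    then show ?thesis using le by blast
  next
    assume "\<exists>c. S \<inter> C = {c}"
    then obtain c where SC1: "S \<inter> C = {c}" by blast
    have cC: "c \<in> C" using SC1 by blast
    obtain v where v: "v \<in> C" "v \<noteq> c"
    proof -
      have "C - {c} \<noteq> {}"
      proof
        assume "C - {c} = {}"
        then have "C \<subseteq> {c}" by blast
        then have "card C \<le> 1" using card_mono[of "{c}" C] by simp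
        then show False using C2 by simp
      qed
      then show ?thesis using that by blast
    qed
    have R2: "card R \<ge> 2"
    proof (rule ccontr)
      assume "\<not> card R \<ge> 2"
      then have "card R = 0 \<or> card R = 1" by linarith
      then obtain r where "R \<subseteq> {r}"
      proof
        assume "card R = 0" then have "R = {}" using finR by simp
        then show ?thesis using that by blast
      next
        assume "card R = 1" then obtain r where "R = {r}" by (metis card_1_singletonE)
        then show ?thesis using that by blast
      qed
      then have "V \<subseteq> S \<union> C \<union> {r}" unfolding R_def by blast
      then show False using L1[OF S(2) C(2) SC1 _ v C(1)] by blast
    qed
    have sum: "\<alpha> + \<omega> = card (S \<union> C) + 1" using cardUI SC1 by simp
    have le: "\<alpha> + \<omega> \<le> card V - 1" using sum cardV R2 by simp
    have "in_G1 \<omega> V E" if eq: "\<alpha> + \<omega> = card V - 1"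
    proof -
      have "card R = 2" using eq sum cardV R2 by simp
      then obtain ra rb where Rr: "R = {ra, rb}" "ra \<noteq> rb" by (metis card_2_iff)
      have raV: "ra \<in> V" and ran: "ra \<notin> S" "ra \<notin> C" using Rr unfolding R_def by blast+
      have rbV: "rb \<in> V" and rbn: "rb \<notin> S" "rb \<notin> C" using Rr unfolding R_def by blast+
      have cov: "V = S \<union> C \<union> {ra, rb}" using Rr S(1) C(1) unfolding R_def by blast
      obtain S' C' r where X: "independent E S'" "clique E C'" "S' \<subseteq> V" "C' \<subseteq> V" "S' \<inter> C' = {}"
        "r \<in> V" "r \<notin> S'" "r \<notin> C'" "V = S' \<union> C' \<union> {r}" "card C' = card C"
        using L3[OF S(2) C(2) S(1) C(1) SC1 raV rbV Rr(2) ran rbn cov C2] by blast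
      have "card C' \<ge> 2" using X(10) C2 by simp
      then have "in_G1 (card C') V E" using L2[OF X(1-9)] by blast
      then show ?thesis using X(10) C(3) by simp
    qed
    then show ?thesis using le by blast
  qed
  have bwd: "\<alpha> + \<omega> = card V - 1" if ex: "\<exists>l\<ge>2. in_G1 l V E"
  proof -
    obtain l where l: "l \<ge> 2" "in_G1 l V E" using ex by blast
    have iso: "graph_iso V E (g1_V l) (g1_E l)" using l(2) unfolding in_G1_def .
    have "\<alpha> = l" unfolding \<alpha>_def using iso_numbers(1)[OF iso] g1_alpha[OF l(1)] by simp
    moreover have "\<omega> = l" unfolding \<omega>_def using iso_numbers(2)[OF iso] g1_omega[OF l(1)] by simp
    moreover have "card V = 2 * l + 1" using iso_numbers(3)[OF iso] card_g1V by simp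
    ultimately show ?thesis by simp
  qed
  show ?thesis
    unfolding \<alpha>_def[symmetric] \<omega>_def[symmetric]
    using main bwd \<open>\<omega> \<ge> 2\<close> by blast
qed

end
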